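(* In a qubit stabilizer subsystem code, a region $R$ of physical qubits is bare-cleanable if and only if for every Pauli operator $P_L$ on the logical subsystem there exists a bare-CSP Pauli operator $P$ supported on $R^c$ that implements $P_L\otimes\mathrm{Id}_J$.
   Context: Stabilizer subsystem code: stabilizer group (abelian subgroup of the Pauli group not containing $-\mathrm{Id}$) with code space its common $+1$ eigenspace, isomorphic via an encoding isometry $V$ to an encoded space of encoded qubits, equipped with the tensor product structure and basis such that every codespace-preserving physical Pauli operator implements an encoded Pauli operator; the encoded qubits are divided into a logical subsystem $\mathcal{H}_L$ (at least one qubit) and a junk subsystem $\mathcal{H}_J$. $\Pi=VV^\dagger$. $A$ is CSP if $[A,\Pi]=0$; dressed-CSP if moreover $V^\dagger AV=A_L\otimes A_J$ (it implements $A_L\otimes A_J$); bare-CSP if also $A_J=\mathrm{Id}_J$. Supported on $R$: of the form $A_R\otimes\mathrm{Id}_{R^c}$. $R$ is bare-cleanable (correctable) if for every logical operator $A_L\in\mathcal{B}(\mathcal{H}_L)$ there is a bare-CSP operator supported on $R^c$ implementing $A_L\otimes\mathrm{Id}_J$. *)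

theory Defs
  imports "Jordan_Normal_Form.Schur_Decomposition"
begin

(* Computational basis of n qubits: index i < 2^n; qubit q carries the bit (i div 2^q) mod 2. *)
definition qbit :: "nat \<Rightarrow> nat \<Rightarrow> bool" where
  "qbit q i = odd (i div 2 ^ q)"

datatype pauli1 = PI | PX | PY | PZ

fun sigma :: "pauli1 \<Rightarrow> bool \<Rightarrow> bool \<Rightarrow> complex" where
  "sigma PI a b = (if a = b then 1 else 0)"
| "sigma PX a b = (if a \<noteq> b then 1 else 0)"
| "sigma PY a b = (if a = b then 0 else if a then \<i> else - \<i>)"
| "sigma PZ a b = (if a = b then (if a then -1 else 1) else 0)"

definition pauli_mat :: "nat \<Rightarrow> complex \<Rightarrow> (nat \<Rightarrow> pauli1) \<Rightarrow> complex mat" where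
  "pauli_mat n c p = mat (2^n) (2^n) (\<lambda>(i,j). c * (\<Prod>q<n. sigma (p q) (qbit q i) (qbit q j)))"

definition pauli_group :: "nat \<Rightarrow> complex mat set" where
  "pauli_group n = {pauli_mat n c p | c p. c \<in> {1, -1, \<i>, -\<i>}}"

(* Kronecker product A (x) B  (first factor most significant) *)
definition kron :: "complex mat \<Rightarrow> complex mat \<Rightarrow> complex mat" where
  "kron A B = mat (dim_row A * dim_row B) (dim_col A * dim_col B)
     (\<lambda>(i,j). A $$ (i div dim_row B, j div dim_col B) * B $$ (i mod dim_row B, j mod dim_col B))"

(* A is supported on the set of qubits T: A = A_T (x) Id_{T^c} *)
definition supported_on :: "nat \<Rightarrow> nat set \<Rightarrow> complex mat \<Rightarrow> bool" where
  "supported_on n T A \<longleftrightarrow> A \<in> carrier_mat (2^n) (2^n) \<and>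
     (\<exists>B :: (nat \<Rightarrow> bool) \<Rightarrow> (nat \<Rightarrow> bool) \<Rightarrow> complex.
        \<forall>i < 2^n. \<forall>j < 2^n. A $$ (i,j) =
          (if \<forall>q<n. q \<notin> T \<longrightarrow> qbit q i = qbit q j
           then B (\<lambda>q. q \<in> T \<and> qbit q i) (\<lambda>q. q \<in> T \<and> qbit q j) else 0))"

definition code_space :: "nat \<Rightarrow> complex mat set \<Rightarrow> complex vec set" where
  "code_space n S = {v \<in> carrier_vec (2^n). \<forall>s\<in>S. s *\<^sub>v v = v}"

(* Stabilizer subsystem code on n physical qubits with stabilizer group S, encoding isometry V
   onto kL + kJ encoded qubits; the logical subsystem consists of the kL most significant encoded
   qubits (first Kronecker factor), the junk subsystem of the remaining kJ qubits. *)
definition stabilizer_subsystem_code ::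
  "nat \<Rightarrow> nat \<Rightarrow> nat \<Rightarrow> complex mat set \<Rightarrow> complex mat \<Rightarrow> bool" where
  "stabilizer_subsystem_code n kL kJ S V \<longleftrightarrow>
     S \<subseteq> pauli_group n \<and> 1\<^sub>m (2^n) \<in> S \<and>
     (\<forall>a\<in>S. \<forall>b\<in>S. a * b \<in> S) \<and> (\<forall>a\<in>S. mat_adjoint a \<in> S) \<and>
     (\<forall>a\<in>S. \<forall>b\<in>S. a * b = b * a) \<and> - 1\<^sub>m (2^n) \<notin> S \<and>
     kL \<ge> 1 \<and>
     V \<in> carrier_mat (2^n) (2^(kL+kJ)) \<and>
     mat_adjoint V * V = 1\<^sub>m (2^(kL+kJ)) \<and>
     (\<forall>v\<in>carrier_vec (2^n). v \<in> code_space n S \<longleftrightarrow> (V * mat_adjoint V) *\<^sub>v v = v) \<and>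
     (\<forall>P\<in>pauli_group n. P * (V * mat_adjoint V) = (V * mat_adjoint V) * P \<longrightarrow>
          mat_adjoint V * P * V \<in> pauli_group (kL+kJ))"

definition code_proj :: "complex mat \<Rightarrow> complex mat" where
  "code_proj V = V * mat_adjoint V"

definition CSP :: "complex mat \<Rightarrow> complex mat \<Rightarrow> bool" where
  "CSP V A \<longleftrightarrow> A * code_proj V = code_proj V * A"

definition bare_implements :: "nat \<Rightarrow> complex mat \<Rightarrow> complex mat \<Rightarrow> complex mat \<Rightarrow> bool" where
  "bare_implements kJ V A AL \<longleftrightarrow> CSP V A \<and> mat_adjoint V * A * V = kron AL (1\<^sub>m (2^kJ))"

definition bare_cleanable :: "nat \<Rightarrow> nat \<Rightarrow> nat \<Rightarrow> complex mat \<Rightarrow> nat set \<Rightarrow> bool" where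
  "bare_cleanable n kL kJ V R \<longleftrightarrow>
     (\<forall>AL \<in> carrier_mat (2^kL) (2^kL). \<exists>A \<in> carrier_mat (2^n) (2^n).
        supported_on n ({..<n} - R) A \<and> bare_implements kJ V A AL)"

end

theory Submission
  imports Defs
begin


lemma qbit_bit: "qbit q i = bit i q"
  unfolding qbit_def by (simp add: bit_iff_odd)

lemma qbit_lt: "i < 2^n \<Longrightarrow> n \<le> q \<Longrightarrow> \<not> qbit q i"
  unfolding qbit_bit by (metis bit_take_bit_iff not_less take_bit_nat_eq_self_iff)

lemma bits_inj:
  assumes "i < 2^k" "j < 2^k" "\<forall>q<k. qbit q i = qbit q j"
  shows "i = j"
proof (rule bit_eqI)
  fix q show "bit i q = bit j q"
  proof (cases "q < k")
    case True then show ?thesis using assms(3) by (simp add: qbit_bit)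
  next
    case False then show ?thesis using qbit_lt[OF assms(1)] qbit_lt[OF assms(2)]
      by (simp add: qbit_bit)
  qed
qed

lemma qbit_mod: "q < k \<Longrightarrow> qbit q (i mod 2^k) = qbit q i"
  unfolding qbit_bit by (metis bit_take_bit_iff take_bit_eq_mod)

lemma qbit_div: "qbit q (i div 2^k) = qbit (q + k) i"
proof -
  have "i div 2^k div 2^q = i div (2^k * 2^q)" by (simp add: div_mult2_eq)
  then show ?thesis by (simp add: qbit_def power_add mult.commute)
qed

lemma qbit_0: "qbit 0 i = odd i" unfolding qbit_def by simp
lemma qbit_Suc: "qbit (Suc q) i = qbit q (i div 2)"
  unfolding qbit_def by (simp add: div_mult2_eq mult.commute)

lemma sum_double: "(\<Sum>i<2*N. g i) = (\<Sum>m<N. g (2*m) + g (2*m+1))" for g :: "nat \<Rightarrow> 'a::comm_monoid_add"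
  by (induction N) (simp_all add: add.assoc)

lemma sum_bits:
  fixes f :: "nat \<Rightarrow> bool \<Rightarrow> 'a::comm_semiring_1"
  shows "(\<Sum>i<2^n. \<Prod>q<n. f q (qbit q i)) = (\<Prod>q<n. f q False + f q True)"
proof (induction n arbitrary: f)
  case 0 then show ?case by simp
next
  case (Suc n)
  have e: "(\<Prod>q<Suc n. f q (qbit q i)) = f 0 (odd i) * (\<Prod>q<n. f (Suc q) (qbit q (i div 2)))" for i
    unfolding prod.lessThan_Suc_shift qbit_0 qbit_Suc by simp
  have o: "odd (2*m+1::nat)" "(2*m+1) div 2 = m" "(2*m) div 2 = m" "\<not> odd (2*m::nat)" for m :: nat by simp_all
  have "(\<Sum>i<2^Suc n. \<Prod>q<Suc n. f q (qbit q i))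
     = (\<Sum>m<2^n. f 0 False * (\<Prod>q<n. f (Suc q) (qbit q m)) + f 0 True * (\<Prod>q<n. f (Suc q) (qbit q m)))"
    unfolding e power_Suc sum_double by simp
  also have "\<dots> = (f 0 False + f 0 True) * (\<Sum>m<2^n. (\<Prod>q<n. f (Suc q) (qbit q m)))"
    unfolding sum.distrib distrib_right sum_distrib_left ..
  also have "\<dots> = (\<Prod>q<Suc n. f q False + f q True)"
    by (simp only: prod.lessThan_Suc_shift Suc[of "\<lambda>q. f (Suc q)"])
  finally show ?case .
qed

lemma UNIV_pauli1: "(UNIV :: pauli1 set) = {PI, PX, PY, PZ}"
  by (auto intro: pauli1.exhaust)

lemma s4: "(\<Sum>s\<in>UNIV. f s) = f PI + f PX + f PY + f PZ" for f :: "pauli1 \<Rightarrow> 'a::comm_monoid_add"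
  unfolding UNIV_pauli1 by (simp add: add.assoc)

lemma finite_pauli1[simp]: "finite (UNIV :: pauli1 set)"
  by (simp add: UNIV_pauli1)

definition coef :: "pauli1 \<Rightarrow> bool \<Rightarrow> bool \<Rightarrow> complex" where
  "coef s a b = (if a = b then (case s of PI \<Rightarrow> 1/2 | PZ \<Rightarrow> (if a then -1/2 else 1/2) | _ \<Rightarrow> 0)
     else (case s of PX \<Rightarrow> 1/2 | PY \<Rightarrow> (if a then -\<i>/2 else \<i>/2) | _ \<Rightarrow> 0))"

lemma coef_expand: "(\<Sum>s\<in>UNIV. coef s a b * sigma s x y) = (if x = a \<and> y = b then 1 else 0)"
  unfolding s4 coef_def
  by (cases a; cases b; cases x; cases y) (simp_all add: complex_eq_iff)

lemma id_expand: "(\<Sum>s\<in>UNIV. (if s = PI then 1 else 0) * sigma s x y) = (if x = y then 1 else 0)"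
  unfolding s4 by simp

definition eps :: "pauli1 \<Rightarrow> pauli1 \<Rightarrow> complex" where
  "eps a b = (if a = PI \<or> b = PI \<or> a = b then 1 else -1)"
lemma sb: "(\<Sum>x\<in>UNIV. f x) = f False + f True" for f :: "bool \<Rightarrow> 'a::comm_monoid_add"
  unfolding UNIV_bool by simp
lemma sigma_comm: "(\<Sum>x\<in>UNIV. sigma a y x * sigma b x z) = eps a b * (\<Sum>x\<in>UNIV. sigma b y x * sigma a x z)"
  unfolding sb eps_def
  by (cases a; cases b; cases y; cases z) simp_all
lemma sigma_orth: "(\<Sum>x\<in>UNIV. \<Sum>y\<in>UNIV. cnj (sigma a x y) * sigma b x y) = (if a = b then 2 else 0)"
  unfolding sb
  by (cases a; cases b) simp_all
lemma sigma_herm: "cnj (sigma a y x) = sigma a x y"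
  by (cases a; cases x; cases y) simp_all


lemma mult_index:
  assumes "A \<in> carrier_mat r k" "B \<in> carrier_mat k c" "i < r" "j < c"
  shows "(A * B) $$ (i,j) = (\<Sum>l<k. A $$ (i,l) * B $$ (l,j))"
  using assms by (auto simp: scalar_prod_def atLeast0LessThan intro!: sum.cong)

lemma pauli_carrier[simp]: "pauli_mat n c p \<in> carrier_mat (2^n) (2^n)"
  unfolding pauli_mat_def by simp
lemma pauli_dims[simp]: "dim_row (pauli_mat n c p) = 2^n" "dim_col (pauli_mat n c p) = 2^n"
  unfolding pauli_mat_def by simp_all
lemma pauli_index: "i < 2^n \<Longrightarrow> j < 2^n \<Longrightarrow>
   pauli_mat n c p $$ (i,j) = c * (\<Prod>q<n. sigma (p q) (qbit q i) (qbit q j))"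
  unfolding pauli_mat_def by simp
lemma pauli_group_carrier: "P \<in> pauli_group n \<Longrightarrow> P \<in> carrier_mat (2^n) (2^n)"
  unfolding pauli_group_def by auto

lemma pauli_mult_index:
  assumes "i < 2^n" "j < 2^n"
  shows "(pauli_mat n c p * pauli_mat n d r) $$ (i,j)
     = c * d * (\<Prod>q<n. \<Sum>x\<in>UNIV. sigma (p q) (qbit q i) x * sigma (r q) x (qbit q j))"
proof -
  have "(pauli_mat n c p * pauli_mat n d r) $$ (i,j)
     = (\<Sum>k<2^n. pauli_mat n c p $$ (i,k) * pauli_mat n d r $$ (k,j))"
    using assms by (intro mult_index) auto
  also have "\<dots> = (\<Sum>k<2^n. c * d * (\<Prod>q<n. sigma (p q) (qbit q i) (qbit q k) * sigma (r q) (qbit q k) (qbit q j)))"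
    using assms by (intro sum.cong) (auto simp: pauli_index prod.distrib)
  also have "\<dots> = c * d * (\<Sum>k<2^n. (\<Prod>q<n. sigma (p q) (qbit q i) (qbit q k) * sigma (r q) (qbit q k) (qbit q j)))"
    by (simp add: sum_distrib_left)
  also have "\<dots> = c * d * (\<Prod>q<n. \<Sum>x\<in>UNIV. sigma (p q) (qbit q i) x * sigma (r q) x (qbit q j))"
    by (subst sum_bits[where f = "\<lambda>q x. sigma (p q) (qbit q i) x * sigma (r q) x (qbit q j)"]) (simp add: sb)
  finally show ?thesis .
qed

lemma pauli_comm:
  "pauli_mat n c p * pauli_mat n d r = (\<Prod>q<n. eps (p q) (r q)) \<cdot>\<^sub>m (pauli_mat n d r * pauli_mat n c p)"
proof (rule eq_matI)
  fix i j assume "i < dim_row ((\<Prod>q<n. eps (p q) (r q)) \<cdot>\<^sub>m (pauli_mat n d r * pauli_mat n c p))"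
    "j < dim_col ((\<Prod>q<n. eps (p q) (r q)) \<cdot>\<^sub>m (pauli_mat n d r * pauli_mat n c p))"
  then have ij: "i < 2^n" "j < 2^n" by auto
  have e1: "(pauli_mat n c p * pauli_mat n d r) $$ (i, j) = c * d * (\<Prod>q<n. \<Sum>x\<in>UNIV. sigma (p q) (qbit q i) x * sigma (r q) x (qbit q j))"
    by (rule pauli_mult_index[OF ij])
  have e2: "(pauli_mat n d r * pauli_mat n c p) $$ (i, j) = d * c * (\<Prod>q<n. \<Sum>x\<in>UNIV. sigma (r q) (qbit q i) x * sigma (p q) x (qbit q j))"
    by (rule pauli_mult_index[OF ij])
  have e3: "(\<Prod>q<n. \<Sum>x\<in>UNIV. sigma (p q) (qbit q i) x * sigma (r q) x (qbit q j))
     = (\<Prod>q<n. eps (p q) (r q) * (\<Sum>x\<in>UNIV. sigma (r q) (qbit q i) x * sigma (p q) x (qbit q j)))"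
    by (rule prod.cong[OF refl]) (rule sigma_comm)
  have e4: "((\<Prod>q<n. eps (p q) (r q)) \<cdot>\<^sub>m (pauli_mat n d r * pauli_mat n c p)) $$ (i,j)
     = (\<Prod>q<n. eps (p q) (r q)) * (pauli_mat n d r * pauli_mat n c p) $$ (i, j)"
    using ij by (intro index_smult_mat) auto
  show "(pauli_mat n c p * pauli_mat n d r) $$ (i, j) =
         ((\<Prod>q<n. eps (p q) (r q)) \<cdot>\<^sub>m (pauli_mat n d r * pauli_mat n c p)) $$ (i, j)"
    unfolding e4 e2 e1 e3 prod.distrib by (simp only: mult_ac)
qed auto

lemma pm1_mult: "a \<in> {1, -1} \<Longrightarrow> b \<in> {1, -1} \<Longrightarrow> a * b \<in> {1::complex, -1}"
  by auto

lemma prod_pm1: "finite F \<Longrightarrow> (\<And>q. q \<in> F \<Longrightarrow> f q \<in> {1, -1}) \<Longrightarrow> prod f F \<in> {1::complex, -1}"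
proof (induction F rule: finite_induct)
  case (insert x F)
  then have "prod f (insert x F) = f x * prod f F" by simp
  moreover have "f x \<in> {1,-1}" "prod f F \<in> {1,-1}" using insert by auto
  ultimately show ?case by (metis pm1_mult)
qed simp

lemma eps_pm1: "eps a b \<in> {1, -1}" unfolding eps_def by auto

lemma pauli_smult: "a \<cdot>\<^sub>m pauli_mat n c p = pauli_mat n (a * c) p"
  by (rule eq_matI) (auto simp: pauli_index)

lemma adj_dims[simp]: "dim_row (mat_adjoint A) = dim_col A" "dim_col (mat_adjoint A) = dim_row A"
  unfolding mat_adjoint_def by simp_all

lemma adj_index: "i < dim_col (A::complex mat) \<Longrightarrow> j < dim_row A \<Longrightarrow> mat_adjoint A $$ (i,j) = cnj (A $$ (j,i))"
  unfolding mat_adjoint_def by (simp add: mat_of_rows_index)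

lemma adj_carrier: "A \<in> carrier_mat r c \<Longrightarrow> mat_adjoint A \<in> carrier_mat c r"
  by auto

lemma adj_adj: "mat_adjoint (mat_adjoint A) = (A::complex mat)"
  by (rule eq_matI) (auto simp: adj_index)

lemma adj_mult:
  fixes A B :: "complex mat"
  assumes "A \<in> carrier_mat r k" "B \<in> carrier_mat k c"
  shows "mat_adjoint (A * B) = mat_adjoint B * mat_adjoint A"
proof (rule eq_matI)
  fix i j assume "i < dim_row (mat_adjoint B * mat_adjoint A)" "j < dim_col (mat_adjoint B * mat_adjoint A)"
  then have ij: "i < c" "j < r" using assms by auto
  have "mat_adjoint (A * B) $$ (i,j) = cnj ((A * B) $$ (j,i))"
    using assms ij by (simp add: adj_index)
  also have "\<dots> = (\<Sum>l<k. cnj (B $$ (l,i)) * cnj (A $$ (j,l)))"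
    unfolding mult_index[OF assms ij(2) ij(1)] cnj_sum complex_cnj_mult by (simp only: mult.commute)
  also have "\<dots> = (mat_adjoint B * mat_adjoint A) $$ (i,j)"
    using assms ij by (subst mult_index[of _ c k _ r]) (auto simp: adj_index intro!: sum.cong)
  finally show "mat_adjoint (A * B) $$ (i,j) = (mat_adjoint B * mat_adjoint A) $$ (i,j)" .
qed (use assms in auto)

lemma pauli_herm: "mat_adjoint (pauli_mat n 1 p) = pauli_mat n 1 p"
  by (rule eq_matI) (auto simp: adj_index pauli_index sigma_herm)

definition msum :: "nat \<Rightarrow> nat \<Rightarrow> 'x set \<Rightarrow> ('x \<Rightarrow> complex) \<Rightarrow> ('x \<Rightarrow> complex mat) \<Rightarrow> complex mat" where
  "msum r c X w M = mat r c (\<lambda>(i,j). \<Sum>x\<in>X. w x * M x $$ (i,j))"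

lemma msum_carrier[simp]: "msum r c X w M \<in> carrier_mat r c"
  unfolding msum_def by simp
lemma msum_dims[simp]: "dim_row (msum r c X w M) = r" "dim_col (msum r c X w M) = c"
  unfolding msum_def by simp_all
lemma msum_index: "i < r \<Longrightarrow> j < c \<Longrightarrow> msum r c X w M $$ (i,j) = (\<Sum>x\<in>X. w x * M x $$ (i,j))"
  unfolding msum_def by simp

lemma msum_mult_right:
  assumes "\<And>x. x \<in> X \<Longrightarrow> M x \<in> carrier_mat r k" "N \<in> carrier_mat k c"
  shows "msum r k X w M * N = msum r c X w (\<lambda>x. M x * N)"
proof (rule eq_matI)
  fix i j assume "i < dim_row (msum r c X w (\<lambda>x. M x * N))" "j < dim_col (msum r c X w (\<lambda>x. M x * N))"
  then have ij: "i < r" "j < c" by auto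
  have "(msum r k X w M * N) $$ (i,j) = (\<Sum>l<k. (\<Sum>x\<in>X. w x * M x $$ (i,l)) * N $$ (l,j))"
    using assms ij by (subst mult_index[of "msum r k X w M" r k N c]) (auto simp: msum_index)
  also have "\<dots> = (\<Sum>x\<in>X. w x * (\<Sum>l<k. M x $$ (i,l) * N $$ (l,j)))"
    unfolding sum_distrib_left sum_distrib_right by (rule trans[OF sum.swap]) (simp add: mult.assoc)
  also have "\<dots> = msum r c X w (\<lambda>x. M x * N) $$ (i,j)"
    using assms ij by (auto simp: msum_index mult_index[of _ r k _ c] simp del: index_mult_mat intro!: sum.cong)
  finally show "(msum r k X w M * N) $$ (i,j) = msum r c X w (\<lambda>x. M x * N) $$ (i,j)" .
qed (use assms in auto)

lemma msum_mult_left: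
  assumes "\<And>x. x \<in> X \<Longrightarrow> M x \<in> carrier_mat k c" "N \<in> carrier_mat r k"
  shows "N * msum k c X w M = msum r c X w (\<lambda>x. N * M x)"
proof (rule eq_matI)
  fix i j assume "i < dim_row (msum r c X w (\<lambda>x. N * M x))" "j < dim_col (msum r c X w (\<lambda>x. N * M x))"
  then have ij: "i < r" "j < c" by auto
  have "(N * msum k c X w M) $$ (i,j) = (\<Sum>l<k. N $$ (i,l) * (\<Sum>x\<in>X. w x * M x $$ (l,j)))"
    using assms ij by (subst mult_index[of N r k]) (auto simp: msum_index)
  also have "\<dots> = (\<Sum>x\<in>X. w x * (\<Sum>l<k. N $$ (i,l) * M x $$ (l,j)))"
    unfolding sum_distrib_left by (rule trans[OF sum.swap]) (simp add: mult.left_commute)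
  also have "\<dots> = msum r c X w (\<lambda>x. N * M x) $$ (i,j)"
    using assms ij by (auto simp: msum_index mult_index[of _ r k _ c] simp del: index_mult_mat intro!: sum.cong)
  finally show "(N * msum k c X w M) $$ (i,j) = msum r c X w (\<lambda>x. N * M x) $$ (i,j)" .
qed (use assms in auto)



lemma prod_ind: "finite F \<Longrightarrow> (\<Prod>q\<in>F. if P q then 1 else 0) = (if \<forall>q\<in>F. P q then (1::complex) else 0)"
  by (induction F rule: finite_induct) auto

lemma sum_collapse:
  assumes "finite X" "x0 \<in> X" "\<And>x. x \<in> X \<Longrightarrow> P x \<longleftrightarrow> x = x0"
  shows "(\<Sum>x\<in>X. f x * (if P x then 1 else 0)) = (f x0 :: complex)"
proof -
  have "(\<Sum>x\<in>X. f x * (if P x then 1 else 0)) = (\<Sum>x\<in>X. if x = x0 then f x else 0)"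
    using assms(3) by (intro sum.cong) auto
  also have "\<dots> = f x0" using assms(1,2) by (simp add: sum.delta')
  finally show ?thesis .
qed

lemma expand_generic:
  fixes X :: "'x set" and w :: "'x \<Rightarrow> complex" and n :: nat
  assumes "finite X"
  shows "(\<Sum>x\<in>X. w x * (\<Prod>q<n. \<Sum>s\<in>UNIV. g x q s * sigma s (a q) (b q)))
    = (\<Sum>p\<in>PiE {..<n} (\<lambda>_. UNIV). (\<Sum>x\<in>X. w x * (\<Prod>q<n. g x q (p q))) * (\<Prod>q<n. sigma (p q) (a q) (b q)))"
proof -
  have e: "(\<Prod>q<n. \<Sum>s\<in>UNIV. g x q s * sigma s (a q) (b q))
     = (\<Sum>p\<in>PiE {..<n} (\<lambda>_. UNIV). \<Prod>q<n. g x q (p q) * sigma (p q) (a q) (b q))" for x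
    by (rule prod_sum_PiE) auto
  have "(\<Sum>x\<in>X. w x * (\<Prod>q<n. \<Sum>s\<in>UNIV. g x q s * sigma s (a q) (b q)))
     = (\<Sum>x\<in>X. \<Sum>p\<in>PiE {..<n} (\<lambda>_. UNIV). w x * (\<Prod>q<n. g x q (p q)) * (\<Prod>q<n. sigma (p q) (a q) (b q)))"
    unfolding e sum_distrib_left prod.distrib mult.assoc ..
  also have "\<dots> = (\<Sum>p\<in>PiE {..<n} (\<lambda>_. UNIV). \<Sum>x\<in>X. w x * (\<Prod>q<n. g x q (p q)) * (\<Prod>q<n. sigma (p q) (a q) (b q)))"
    by (rule sum.swap)
  also have "\<dots> = (\<Sum>p\<in>PiE {..<n} (\<lambda>_. UNIV). (\<Sum>x\<in>X. w x * (\<Prod>q<n. g x q (p q))) * (\<Prod>q<n. sigma (p q) (a q) (b q)))"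
    unfolding sum_distrib_right ..
  finally show ?thesis .
qed

definition dgen :: "nat \<Rightarrow> complex mat \<Rightarrow> (nat \<Rightarrow> pauli1) \<Rightarrow> complex" where
  "dgen k M p = (\<Sum>x\<in>{..<2^k} \<times> {..<2^k}. M $$ x * (\<Prod>q<k. coef (p q) (qbit q (fst x)) (qbit q (snd x))))"

lemma expand_gen:
  assumes M: "M \<in> carrier_mat (2^k) (2^k)"
  shows "M = msum (2^k) (2^k) (PiE {..<k} (\<lambda>_. UNIV)) (dgen k M) (\<lambda>p. pauli_mat k 1 p)"
proof (rule eq_matI)
  fix i j assume "i < dim_row (msum (2^k) (2^k) (PiE {..<k} (\<lambda>_. UNIV)) (dgen k M) (\<lambda>p. pauli_mat k 1 p))"
    "j < dim_col (msum (2^k) (2^k) (PiE {..<k} (\<lambda>_. UNIV)) (dgen k M) (\<lambda>p. pauli_mat k 1 p))"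
  then have ij: "i < 2^k" "j < 2^k" by auto
  let ?X = "{..<2^k} \<times> {..<2^k} :: (nat \<times> nat) set"
  have "msum (2^k) (2^k) (PiE {..<k} (\<lambda>_. UNIV)) (dgen k M) (\<lambda>p. pauli_mat k 1 p) $$ (i,j)
      = (\<Sum>p\<in>PiE {..<k} (\<lambda>_. UNIV). dgen k M p * (\<Prod>q<k. sigma (p q) (qbit q i) (qbit q j)))"
    using ij by (simp add: msum_index pauli_index)
  also have "\<dots> = (\<Sum>x\<in>?X. M $$ x * (\<Prod>q<k. \<Sum>s\<in>UNIV. coef s (qbit q (fst x)) (qbit q (snd x)) * sigma s (qbit q i) (qbit q j)))"
    unfolding dgen_def
    by (rule expand_generic[symmetric, where g = "\<lambda>x q s. coef s (qbit q (fst x)) (qbit q (snd x))"]) simp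
  also have "\<dots> = (\<Sum>x\<in>?X. M $$ x * (if (\<forall>q\<in>{..<k}. qbit q i = qbit q (fst x) \<and> qbit q j = qbit q (snd x)) then 1 else 0))"
    unfolding coef_expand by (simp only: prod_ind finite_lessThan)
  also have "\<dots> = M $$ (i,j)"
  proof (rule sum_collapse)
    fix x assume "x \<in> ?X"
    then show "(\<forall>q\<in>{..<k}. qbit q i = qbit q (fst x) \<and> qbit q j = qbit q (snd x)) \<longleftrightarrow> x = (i,j)"
      using ij bits_inj[of i k "fst x"] bits_inj[of j k "snd x"] by (cases x) auto
  qed (use ij in auto)
  finally show "M $$ (i,j) = msum (2^k) (2^k) (PiE {..<k} (\<lambda>_. UNIV)) (dgen k M) (\<lambda>p. pauli_mat k 1 p) $$ (i,j)" ..
qed (use M in auto)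

definition gsup :: "nat set \<Rightarrow> nat set \<times> nat set \<Rightarrow> nat \<Rightarrow> pauli1 \<Rightarrow> complex" where
  "gsup T x q s = (if q \<in> T then coef s (q \<in> fst x) (q \<in> snd x) else (if s = PI then 1 else 0))"

definition dsup :: "nat \<Rightarrow> nat set \<Rightarrow> ((nat \<Rightarrow> bool) \<Rightarrow> (nat \<Rightarrow> bool) \<Rightarrow> complex) \<Rightarrow> (nat \<Rightarrow> pauli1) \<Rightarrow> complex" where
  "dsup n T B p = (\<Sum>x\<in>Pow T \<times> Pow T. B (\<lambda>q. q \<in> fst x) (\<lambda>q. q \<in> snd x) * (\<Prod>q<n. gsup T x q (p q)))"

lemma dsup_zero:
  assumes "q0 < n" "q0 \<notin> T" "p q0 \<noteq> PI"
  shows "dsup n T B p = 0"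
  unfolding dsup_def
proof (rule sum.neutral, rule ballI)
  fix x
  have "(\<Prod>q<n. gsup T x q (p q)) = 0"
    using assms by (intro prod_zero) (auto simp: gsup_def intro!: bexI[of _ q0])
  then show "B (\<lambda>q. q \<in> fst x) (\<lambda>q. q \<in> snd x) * (\<Prod>q<n. gsup T x q (p q)) = 0" by simp
qed

lemma gsup_expand:
  "(\<Sum>s\<in>UNIV. gsup T x q s * sigma s a b)
    = (if (q \<in> T \<longrightarrow> a = (q \<in> fst x) \<and> b = (q \<in> snd x)) \<and> (q \<notin> T \<longrightarrow> a = b) then 1 else 0)"
  by (cases "q \<in> T") (simp_all add: gsup_def coef_expand id_expand)

lemma expand_sup:
  assumes T: "T \<subseteq> {..<n}" and A: "A \<in> carrier_mat (2^n) (2^n)"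
    and B: "\<forall>i<2^n. \<forall>j<2^n. A $$ (i,j) = (if \<forall>q<n. q \<notin> T \<longrightarrow> qbit q i = qbit q j
           then B (\<lambda>q. q \<in> T \<and> qbit q i) (\<lambda>q. q \<in> T \<and> qbit q j) else 0)"
  shows "A = msum (2^n) (2^n) (PiE {..<n} (\<lambda>_. UNIV)) (dsup n T B) (\<lambda>p. pauli_mat n 1 p)"
proof (rule eq_matI)
  fix i j assume "i < dim_row (msum (2^n) (2^n) (PiE {..<n} (\<lambda>_. UNIV)) (dsup n T B) (\<lambda>p. pauli_mat n 1 p))"
    "j < dim_col (msum (2^n) (2^n) (PiE {..<n} (\<lambda>_. UNIV)) (dsup n T B) (\<lambda>p. pauli_mat n 1 p))"
  then have ij: "i < 2^n" "j < 2^n" by auto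
  let ?X = "Pow T \<times> Pow T"
  have fin: "finite ?X" using T finite_subset by blast
  let ?P = "\<lambda>x. \<forall>q\<in>{..<n}. (q \<in> T \<longrightarrow> qbit q i = (q \<in> fst x) \<and> qbit q j = (q \<in> snd x)) \<and> (q \<notin> T \<longrightarrow> qbit q i = qbit q j)"
  have "msum (2^n) (2^n) (PiE {..<n} (\<lambda>_. UNIV)) (dsup n T B) (\<lambda>p. pauli_mat n 1 p) $$ (i,j)
      = (\<Sum>p\<in>PiE {..<n} (\<lambda>_. UNIV). dsup n T B p * (\<Prod>q<n. sigma (p q) (qbit q i) (qbit q j)))"
    using ij by (simp add: msum_index pauli_index)
  also have "\<dots> = (\<Sum>x\<in>?X. B (\<lambda>q. q \<in> fst x) (\<lambda>q. q \<in> snd x) * (\<Prod>q<n. \<Sum>s\<in>UNIV. gsup T x q s * sigma s (qbit q i) (qbit q j)))"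
    unfolding dsup_def
    by (rule expand_generic[symmetric, where g = "gsup T"]) (rule fin)
  also have "\<dots> = (\<Sum>x\<in>?X. B (\<lambda>q. q \<in> fst x) (\<lambda>q. q \<in> snd x) * (if ?P x then 1 else 0))"
    unfolding gsup_expand by (simp only: prod_ind finite_lessThan)
  also have "\<dots> = A $$ (i,j)"
  proof (cases "\<forall>q<n. q \<notin> T \<longrightarrow> qbit q i = qbit q j")
    case True
    let ?x0 = "({q\<in>T. qbit q i}, {q\<in>T. qbit q j})"
    have "(\<Sum>x\<in>?X. B (\<lambda>q. q \<in> fst x) (\<lambda>q. q \<in> snd x) * (if ?P x then 1 else 0))
        = B (\<lambda>q. q \<in> fst ?x0) (\<lambda>q. q \<in> snd ?x0)"
    proof (rule sum_collapse[OF fin])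
      fix x assume x: "x \<in> ?X"
      show "?P x \<longleftrightarrow> x = ?x0"
      proof
        assume "?P x" then show "x = ?x0" using x T by (cases x) auto
      next
        assume "x = ?x0" then show "?P x" using True by auto
      qed
    qed auto
    then show ?thesis using True B ij by simp
  next
    case False
    then have nP: "\<not> ?P x" for x by auto
    have "(\<Sum>x\<in>?X. B (\<lambda>q. q \<in> fst x) (\<lambda>q. q \<in> snd x) * (if ?P x then 1 else 0)) = 0"
      by (rule sum.neutral) (simp only: nP if_False mult_zero_right; simp)
    moreover have Aij: "A $$ (i,j) = (if \<forall>q<n. q \<notin> T \<longrightarrow> qbit q i = qbit q j
           then B (\<lambda>q. q \<in> T \<and> qbit q i) (\<lambda>q. q \<in> T \<and> qbit q j) else 0)" using B ij by blast
    ultimately show ?thesis unfolding Aij if_not_P[OF False] by blast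
  qed
  finally show "A $$ (i,j) = msum (2^n) (2^n) (PiE {..<n} (\<lambda>_. UNIV)) (dsup n T B) (\<lambda>p. pauli_mat n 1 p) $$ (i,j)" ..
qed (use A in auto)



lemma prod_split_add: "(\<Prod>q<a+b. f q) = (\<Prod>q<a. f q) * (\<Prod>q<b. f (q + a))" for f :: "nat \<Rightarrow> complex"
  by (induction b) (simp_all add: mult.assoc add.commute)

lemma kron_index:
  "i < dim_row A * dim_row B \<Longrightarrow> j < dim_col A * dim_col B \<Longrightarrow>
   kron A B $$ (i,j) = A $$ (i div dim_row B, j div dim_col B) * B $$ (i mod dim_row B, j mod dim_col B)"
  unfolding kron_def by simp

lemma kron_dims[simp]: "dim_row (kron A B) = dim_row A * dim_row B" "dim_col (kron A B) = dim_col A * dim_col B"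
  unfolding kron_def by simp_all

lemma mod_eq_bits: "(i mod 2^k = j mod 2^k) \<longleftrightarrow> (\<forall>q<k. qbit q i = qbit q j)"
proof
  assume "i mod 2^k = j mod 2^k" then show "\<forall>q<k. qbit q i = qbit q j"
    by (metis qbit_mod)
next
  assume "\<forall>q<k. qbit q i = qbit q j"
  then show "i mod 2^k = j mod 2^k"
    by (intro bits_inj[of _ k]) (auto simp: qbit_mod)
qed

lemma kron_pauli:
  "kron (pauli_mat kL c p) (1\<^sub>m (2^kJ)) = pauli_mat (kL+kJ) c (\<lambda>q. if q < kJ then PI else p (q - kJ))"
proof (rule eq_matI)
  define r where "r = (\<lambda>q. if q < kJ then PI else p (q - kJ))"
  fix i j assume "i < dim_row (pauli_mat (kL+kJ) c (\<lambda>q. if q < kJ then PI else p (q - kJ)))"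
    "j < dim_col (pauli_mat (kL+kJ) c (\<lambda>q. if q < kJ then PI else p (q - kJ)))"
  then have ij': "i < 2^(kL+kJ)" "j < 2^(kL+kJ)" by auto
  then have ij: "i < 2^kL * 2^kJ" "j < 2^kL * 2^kJ" by (auto simp: power_add)
  have d: "i div 2^kJ < 2^kL" "j div 2^kJ < 2^kL" using ij by (auto simp: less_mult_imp_div_less)
  have "kron (pauli_mat kL c p) (1\<^sub>m (2^kJ)) $$ (i,j)
     = pauli_mat kL c p $$ (i div 2^kJ, j div 2^kJ) * 1\<^sub>m (2^kJ) $$ (i mod 2^kJ, j mod 2^kJ)"
    using ij by (simp add: kron_index)
  also have "\<dots> = c * (\<Prod>q<kL. sigma (p q) (qbit (q+kJ) i) (qbit (q+kJ) j)) * (if \<forall>q<kJ. qbit q i = qbit q j then 1 else 0)"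
    using d by (simp add: pauli_index qbit_div mod_eq_bits[symmetric])
  also have "\<dots> = pauli_mat (kL+kJ) c r $$ (i,j)"
  proof -
    have split: "(\<Prod>q<kJ+kL. sigma (r q) (qbit q i) (qbit q j))
      = (\<Prod>q<kJ. sigma (r q) (qbit q i) (qbit q j)) * (\<Prod>q<kL. sigma (r (q+kJ)) (qbit (q+kJ) i) (qbit (q+kJ) j))"
      by (rule prod_split_add)
    have A1: "(\<Prod>q<kJ. sigma (r q) (qbit q i) (qbit q j)) = (\<Prod>q<kJ. if qbit q i = qbit q j then 1 else 0)"
      by (rule prod.cong) (auto simp: r_def)
    have A1': "(\<Prod>q<kJ. if qbit q i = qbit q j then 1 else 0) = (if \<forall>q<kJ. qbit q i = qbit q j then (1::complex) else 0)"
      by (simp add: prod_ind lessThan_iff)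
    have A2: "(\<Prod>q<kL. sigma (r (q+kJ)) (qbit (q+kJ) i) (qbit (q+kJ) j)) = (\<Prod>q<kL. sigma (p q) (qbit (q+kJ) i) (qbit (q+kJ) j))"
      by (simp add: r_def)
    have "pauli_mat (kL+kJ) c r $$ (i,j) = c * (\<Prod>q<kJ+kL. sigma (r q) (qbit q i) (qbit q j))"
      using ij' by (simp add: pauli_index add.commute)
    then show ?thesis unfolding split A1 A1' A2 by simp
  qed
  finally show "kron (pauli_mat kL c p) (1\<^sub>m (2^kJ)) $$ (i,j) = pauli_mat (kL+kJ) c (\<lambda>q. if q < kJ then PI else p (q - kJ)) $$ (i,j)"
    unfolding r_def .
qed (auto simp: power_add)

lemma kron_msum:
  assumes "\<And>x. x \<in> X \<Longrightarrow> M x \<in> carrier_mat r c" "0 < K"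
  shows "kron (msum r c X w M) (1\<^sub>m K) = msum (r*K) (c*K) X w (\<lambda>x. kron (M x) (1\<^sub>m K))"
proof (rule eq_matI)
  fix i j assume "i < dim_row (msum (r*K) (c*K) X w (\<lambda>x. kron (M x) (1\<^sub>m K)))"
    "j < dim_col (msum (r*K) (c*K) X w (\<lambda>x. kron (M x) (1\<^sub>m K)))"
  then have ij: "i < r*K" "j < c*K" by auto
  have d: "i div K < r" "j div K < c" using ij by (auto simp: less_mult_imp_div_less)
  have "kron (msum r c X w M) (1\<^sub>m K) $$ (i,j) = (\<Sum>x\<in>X. w x * M x $$ (i div K, j div K)) * 1\<^sub>m K $$ (i mod K, j mod K)"
    using ij d by (simp add: kron_index msum_index)
  also have "\<dots> = (\<Sum>x\<in>X. w x * (M x $$ (i div K, j div K) * 1\<^sub>m K $$ (i mod K, j mod K)))"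
    by (simp add: sum_distrib_right mult.assoc)
  also have "\<dots> = msum (r*K) (c*K) X w (\<lambda>x. kron (M x) (1\<^sub>m K)) $$ (i,j)"
  proof -
    have "kron (M x) (1\<^sub>m K) $$ (i,j) = M x $$ (i div K, j div K) * 1\<^sub>m K $$ (i mod K, j mod K)" if x: "x \<in> X" for x
    proof -
      have "dim_row (M x) = r" "dim_col (M x) = c" using assms(1)[OF x] by auto
      then show ?thesis using ij by (simp add: kron_index)
    qed
    then show ?thesis using ij by (simp add: msum_index)
  qed
  finally show "kron (msum r c X w M) (1\<^sub>m K) $$ (i,j) = msum (r*K) (c*K) X w (\<lambda>x. kron (M x) (1\<^sub>m K)) $$ (i,j)" .
qed auto

lemma pauli_supported:
  assumes "\<forall>q<n. q \<notin> T \<longrightarrow> p q = PI"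
  shows "supported_on n T (pauli_mat n c p)"
  unfolding supported_on_def
proof (intro conjI exI allI impI)
  show "pauli_mat n c p \<in> carrier_mat (2^n) (2^n)" by simp
  fix i j :: nat assume ij: "i < 2^n" "j < 2^n"
  let ?B = "\<lambda>\<alpha> \<beta>. c * (\<Prod>q\<in>{..<n} \<inter> T. sigma (p q) (\<alpha> q) (\<beta> q))"
  have "pauli_mat n c p $$ (i,j) = c * ((\<Prod>q\<in>{..<n} \<inter> T. sigma (p q) (qbit q i) (qbit q j))
        * (\<Prod>q\<in>{..<n} - T. sigma (p q) (qbit q i) (qbit q j)))"
    using ij by (simp add: pauli_index prod.Int_Diff[of "{..<n}" _ T])
  also have "(\<Prod>q\<in>{..<n} - T. sigma (p q) (qbit q i) (qbit q j)) = (\<Prod>q\<in>{..<n} - T. if qbit q i = qbit q j then 1 else 0)"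
    using assms by (intro prod.cong) auto
  also have "\<dots> = (if \<forall>q\<in>{..<n} - T. qbit q i = qbit q j then 1 else 0)"
    by (simp add: prod_ind)
  also have "(\<Prod>q\<in>{..<n} \<inter> T. sigma (p q) (qbit q i) (qbit q j))
      = (\<Prod>q\<in>{..<n} \<inter> T. sigma (p q) (q \<in> T \<and> qbit q i) (q \<in> T \<and> qbit q j))"
    by (intro prod.cong) auto
  finally show "pauli_mat n c p $$ (i,j) = (if \<forall>q<n. q \<notin> T \<longrightarrow> qbit q i = qbit q j
      then ?B (\<lambda>q. q \<in> T \<and> qbit q i) (\<lambda>q. q \<in> T \<and> qbit q j) else 0)"
    by auto
qed

lemma msum_supported:
  assumes "\<And>x. x \<in> X \<Longrightarrow> supported_on n T (M x)"
  shows "supported_on n T (msum (2^n) (2^n) X w M)"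
proof -
  have "\<forall>x\<in>X. \<exists>B. \<forall>i < 2^n. \<forall>j < 2^n. M x $$ (i,j) =
          (if \<forall>q<n. q \<notin> T \<longrightarrow> qbit q i = qbit q j
           then B (\<lambda>q. q \<in> T \<and> qbit q i) (\<lambda>q. q \<in> T \<and> qbit q j) else 0)"
    using assms unfolding supported_on_def by blast
  from bchoice[OF this] obtain Bf where Bf: "\<forall>x\<in>X. \<forall>i < 2^n. \<forall>j < 2^n. M x $$ (i,j) =
          (if \<forall>q<n. q \<notin> T \<longrightarrow> qbit q i = qbit q j
           then Bf x (\<lambda>q. q \<in> T \<and> qbit q i) (\<lambda>q. q \<in> T \<and> qbit q j) else 0)"
    by blast
  show ?thesis unfolding supported_on_def
  proof (intro conjI exI allI impI)
    show "msum (2^n) (2^n) X w M \<in> carrier_mat (2^n) (2^n)" by simp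
    fix i j :: nat assume ij: "i < 2^n" "j < 2^n"
    show "msum (2^n) (2^n) X w M $$ (i,j) = (if \<forall>q<n. q \<notin> T \<longrightarrow> qbit q i = qbit q j
       then (\<lambda>\<alpha> \<beta>. \<Sum>x\<in>X. w x * Bf x \<alpha> \<beta>) (\<lambda>q. q \<in> T \<and> qbit q i) (\<lambda>q. q \<in> T \<and> qbit q j) else 0)"
    proof -
      let ?C = "\<forall>q<n. q \<notin> T \<longrightarrow> qbit q i = qbit q j"
      have "msum (2^n) (2^n) X w M $$ (i,j) = (\<Sum>x\<in>X. w x * (if ?C then Bf x (\<lambda>q. q \<in> T \<and> qbit q i) (\<lambda>q. q \<in> T \<and> qbit q j) else 0))"
        using ij Bf by (simp add: msum_index)
      also have "\<dots> = (if ?C then (\<lambda>\<alpha> \<beta>. \<Sum>x\<in>X. w x * Bf x \<alpha> \<beta>) (\<lambda>q. q \<in> T \<and> qbit q i) (\<lambda>q. q \<in> T \<and> qbit q j) else 0)"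
      proof (cases ?C)
        case True then show ?thesis by (simp only: if_P[OF True])
      next
        case False then show ?thesis by (simp only: if_not_P[OF False] if_False mult_zero_right sum.neutral_const)
      qed
      finally show ?thesis .
    qed
  qed
qed

definition phi :: "nat \<Rightarrow> complex mat \<Rightarrow> complex mat \<Rightarrow> complex" where
  "phi N T M = (\<Sum>i<N. \<Sum>j<N. cnj (T $$ (i,j)) * M $$ (i,j))"

lemma phi_msum: "phi N T (msum N N X w M) = (\<Sum>x\<in>X. w x * phi N T (M x))"
proof -
  have "phi N T (msum N N X w M) = (\<Sum>i<N. \<Sum>j<N. \<Sum>x\<in>X. w x * (cnj (T $$ (i,j)) * M x $$ (i,j)))"
    unfolding phi_def by (auto simp: msum_index sum_distrib_left mult.left_commute intro!: sum.cong)
  also have "\<dots> = (\<Sum>i<N. \<Sum>x\<in>X. \<Sum>j<N. w x * (cnj (T $$ (i,j)) * M x $$ (i,j)))"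
    by (rule sum.cong[OF refl]) (rule sum.swap)
  also have "\<dots> = (\<Sum>x\<in>X. \<Sum>i<N. \<Sum>j<N. w x * (cnj (T $$ (i,j)) * M x $$ (i,j)))"
    by (rule sum.swap)
  also have "\<dots> = (\<Sum>x\<in>X. w x * phi N T (M x))"
    unfolding phi_def sum_distrib_left ..
  finally show ?thesis .
qed

lemma phi_zero: "phi N T (0\<^sub>m N N) = 0"
  unfolding phi_def by simp

lemma phi_pauli:
  "phi (2^m) (pauli_mat m c t) (pauli_mat m e u) = cnj c * e * (\<Prod>q<m. if t q = u q then 2 else 0)"
proof -
  have "phi (2^m) (pauli_mat m c t) (pauli_mat m e u)
     = (\<Sum>i<2^m. \<Sum>j<2^m. cnj c * e * (\<Prod>q<m. cnj (sigma (t q) (qbit q i) (qbit q j)) * sigma (u q) (qbit q i) (qbit q j)))"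
    unfolding phi_def by (auto simp: pauli_index cnj_prod prod.distrib mult_ac intro!: sum.cong)
  also have "\<dots> = cnj c * e * (\<Sum>i<2^m. \<Prod>q<m. \<Sum>y\<in>UNIV. cnj (sigma (t q) (qbit q i) y) * sigma (u q) (qbit q i) y)"
    unfolding sum_distrib_left[symmetric]
    by (subst sum_bits[where f = "\<lambda>q y. cnj (sigma (t q) (qbit q i) y) * sigma (u q) (qbit q i) y" for i]) (simp add: sb)
  also have "\<dots> = cnj c * e * (\<Prod>q<m. \<Sum>x\<in>UNIV. \<Sum>y\<in>UNIV. cnj (sigma (t q) x y) * sigma (u q) x y)"
    by (subst sum_bits[where f = "\<lambda>q x. \<Sum>y\<in>UNIV. cnj (sigma (t q) x y) * sigma (u q) x y"]) (simp add: sb)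
  also have "\<dots> = cnj c * e * (\<Prod>q<m. if t q = u q then 2 else 0)"
    unfolding sigma_orth ..
  finally show ?thesis .
qed

lemma pauli_cong: "(\<forall>q<m. t q = u q) \<Longrightarrow> pauli_mat m e u = pauli_mat m e t"
  by (rule eq_matI) (auto simp: pauli_index intro!: prod.cong)



context
  fixes n kL kJ :: nat and S :: "complex mat set" and V :: "complex mat"
  assumes code: "stabilizer_subsystem_code n kL kJ S V"
begin

lemma V_carrier: "V \<in> carrier_mat (2^n) (2^(kL+kJ))"
  using code unfolding stabilizer_subsystem_code_def by blast
lemma Vd_carrier: "mat_adjoint V \<in> carrier_mat (2^(kL+kJ)) (2^n)"
  using V_carrier by auto
lemma VdV: "mat_adjoint V * V = 1\<^sub>m (2^(kL+kJ))"
  using code unfolding stabilizer_subsystem_code_def by blast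
lemma Pi_carrier: "V * mat_adjoint V \<in> carrier_mat (2^n) (2^n)"
  using V_carrier by auto
lemma code_iff: "v \<in> carrier_vec (2^n) \<Longrightarrow> v \<in> code_space n S \<longleftrightarrow> (V * mat_adjoint V) *\<^sub>v v = v"
  using code unfolding stabilizer_subsystem_code_def by blast
lemma S_pauli: "s \<in> S \<Longrightarrow> s \<in> pauli_group n"
  using code unfolding stabilizer_subsystem_code_def by blast
lemma S_carrier: "s \<in> S \<Longrightarrow> s \<in> carrier_mat (2^n) (2^n)"
  using S_pauli pauli_group_carrier by blast
lemma S_adj: "s \<in> S \<Longrightarrow> mat_adjoint s \<in> S"
  using code unfolding stabilizer_subsystem_code_def by blast
lemma code_pauli: "P \<in> pauli_group n \<Longrightarrow> P * (V * mat_adjoint V) = (V * mat_adjoint V) * P \<Longrightarrow>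
   mat_adjoint V * P * V \<in> pauli_group (kL+kJ)"
  using code unfolding stabilizer_subsystem_code_def by blast

lemma VdPi: "mat_adjoint V * (V * mat_adjoint V) = mat_adjoint V"
proof -
  have "mat_adjoint V * (V * mat_adjoint V) = (mat_adjoint V * V) * mat_adjoint V"
    by (rule assoc_mult_mat[symmetric, OF Vd_carrier V_carrier Vd_carrier])
  also have "\<dots> = mat_adjoint V" unfolding VdV by (rule left_mult_one_mat[OF Vd_carrier])
  finally show ?thesis .
qed

lemma PiV: "(V * mat_adjoint V) * V = V"
proof -
  have "(V * mat_adjoint V) * V = V * (mat_adjoint V * V)"
    by (rule assoc_mult_mat[OF V_carrier Vd_carrier V_carrier])
  also have "\<dots> = V" unfolding VdV by (rule right_mult_one_mat[OF V_carrier])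
  finally show ?thesis .
qed

lemma Pi_idem: "(V * mat_adjoint V) * (V * mat_adjoint V) = V * mat_adjoint V"
proof -
  have "(V * mat_adjoint V) * (V * mat_adjoint V) = V * (mat_adjoint V * (V * mat_adjoint V))"
    by (rule assoc_mult_mat[OF V_carrier Vd_carrier Pi_carrier])
  then show ?thesis unfolding VdPi .
qed

lemma Pi_herm: "mat_adjoint (V * mat_adjoint V) = V * mat_adjoint V"
  using V_carrier Vd_carrier by (simp add: adj_mult adj_adj)

lemma colPi_code: "j < 2^n \<Longrightarrow> col (V * mat_adjoint V) j \<in> code_space n S"
proof -
  assume j: "j < 2^n"
  have c: "col (V * mat_adjoint V) j \<in> carrier_vec (2^n)" by (rule carrier_vecI) (use Pi_carrier in auto)
  have "(V * mat_adjoint V) *\<^sub>v col (V * mat_adjoint V) j = col ((V * mat_adjoint V) * (V * mat_adjoint V)) j"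
    by (rule col_mult2[OF Pi_carrier Pi_carrier j, symmetric])
  also have "\<dots> = col (V * mat_adjoint V) j" unfolding Pi_idem ..
  finally show ?thesis using code_iff[OF c] by simp
qed

lemma s_Pi: "s \<in> S \<Longrightarrow> s * (V * mat_adjoint V) = V * mat_adjoint V"
proof -
  assume s: "s \<in> S"
  show ?thesis
  proof (rule mat_col_eqI)
    fix j assume "j < dim_col (V * mat_adjoint V)"
    then have j: "j < 2^n" using Pi_carrier by auto
    have "col (s * (V * mat_adjoint V)) j = s *\<^sub>v col (V * mat_adjoint V) j"
      by (rule col_mult2[OF S_carrier[OF s] Pi_carrier j])
    also have "\<dots> = col (V * mat_adjoint V) j"
      using colPi_code[OF j] s unfolding code_space_def by blast
    finally show "col (s * (V * mat_adjoint V)) j = col (V * mat_adjoint V) j" .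
  qed (use S_carrier[OF s] Pi_carrier in auto)
qed

lemma Pi_s: "s \<in> S \<Longrightarrow> (V * mat_adjoint V) * s = V * mat_adjoint V"
proof -
  assume s: "s \<in> S"
  have "mat_adjoint s * (V * mat_adjoint V) = V * mat_adjoint V" by (rule s_Pi[OF S_adj[OF s]])
  then have "mat_adjoint (mat_adjoint s * (V * mat_adjoint V)) = mat_adjoint (V * mat_adjoint V)" by simp
  moreover have "mat_adjoint (mat_adjoint s * (V * mat_adjoint V)) = (V * mat_adjoint V) * s"
    unfolding adj_mult[OF adj_carrier[OF S_carrier[OF s]] Pi_carrier] Pi_herm adj_adj ..
  ultimately show ?thesis unfolding Pi_herm by simp
qed

lemma neg_self_zero:
  fixes X :: "complex mat"
  assumes "X \<in> carrier_mat r c" "X = (-1) \<cdot>\<^sub>m X"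
  shows "X = 0\<^sub>m r c"
proof (rule eq_matI)
  fix i j assume ij: "i < dim_row (0\<^sub>m r c :: complex mat)" "j < dim_col (0\<^sub>m r c :: complex mat)"
  have "X $$ (i,j) = ((-1) \<cdot>\<^sub>m X) $$ (i,j)" using assms(2) by simp
  then have "X $$ (i,j) = - X $$ (i,j)" using ij assms(1) by simp
  then show "X $$ (i,j) = 0\<^sub>m r c $$ (i,j)" using ij by simp
qed (use assms in auto)

lemma kill:
  assumes Q: "Q = pauli_mat n 1 p" and nc: "Q * (V * mat_adjoint V) \<noteq> (V * mat_adjoint V) * Q"
  shows "(V * mat_adjoint V) * Q * (V * mat_adjoint V) = 0\<^sub>m (2^n) (2^n)"
proof -
  define P where "P = V * mat_adjoint V"
  have Pc: "P \<in> carrier_mat (2^n) (2^n)" unfolding P_def by (rule Pi_carrier)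
  have Qc: "Q \<in> carrier_mat (2^n) (2^n)" unfolding Q by simp
  have PQc: "P * Q \<in> carrier_mat (2^n) (2^n)" using Pc Qc by simp
  have QPc: "Q * P \<in> carrier_mat (2^n) (2^n)" using Pc Qc by simp
  have Ph: "mat_adjoint P = P" unfolding P_def by (rule Pi_herm)
  have Qh: "mat_adjoint Q = Q" unfolding Q by (rule pauli_herm)
  show ?thesis unfolding P_def[symmetric]
  proof (cases "\<exists>s\<in>S. s * Q \<noteq> Q * s")
    case True
    then obtain s where s: "s \<in> S" "s * Q \<noteq> Q * s" by blast
    obtain c r where scr: "s = pauli_mat n c r" using S_pauli[OF s(1)] unfolding pauli_group_def by blast
    define \<epsilon> where "\<epsilon> = (\<Prod>q<n. eps (r q) (p q))"
    have comm: "s * Q = \<epsilon> \<cdot>\<^sub>m (Q * s)" unfolding \<epsilon>_def scr Q by (rule pauli_comm)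
    have "\<epsilon> \<in> {1, -1}" unfolding \<epsilon>_def by (rule prod_pm1) (simp_all only: finite_lessThan eps_pm1)
    moreover have "\<epsilon> \<noteq> 1" using comm s(2) by auto
    ultimately have em: "\<epsilon> = -1" by auto
    have sc: "s \<in> carrier_mat (2^n) (2^n)" by (rule S_carrier[OF s(1)])
    have Qsc: "Q * s \<in> carrier_mat (2^n) (2^n)" using Qc sc by simp
    have PQsc: "P * (Q * s) \<in> carrier_mat (2^n) (2^n)" using Pc Qsc by simp
    have Ps: "P * s = P" unfolding P_def by (rule Pi_s[OF s(1)])
    have sP: "s * P = P" unfolding P_def by (rule s_Pi[OF s(1)])
    have "P * Q * P = (P * s) * Q * P" unfolding Ps ..
    also have "(P * s) * Q = P * (s * Q)" by (rule assoc_mult_mat[OF Pc sc Qc])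
    also have "P * (s * Q) = \<epsilon> \<cdot>\<^sub>m (P * (Q * s))" unfolding comm by (rule mult_smult_distrib[OF Pc Qsc])
    also have "(\<epsilon> \<cdot>\<^sub>m (P * (Q * s))) * P = \<epsilon> \<cdot>\<^sub>m (P * (Q * s) * P)" by (rule mult_smult_assoc_mat[OF PQsc Pc])
    also have "P * (Q * s) = P * Q * s" by (rule assoc_mult_mat[OF Pc Qc sc, symmetric])
    also have "P * Q * s * P = P * Q * (s * P)" by (rule assoc_mult_mat[OF PQc sc Pc])
    finally have "P * Q * P = (-1) \<cdot>\<^sub>m (P * Q * P)" unfolding sP em .
    then show "P * Q * P = 0\<^sub>m (2^n) (2^n)" by (rule neg_self_zero[rotated]) (use PQc Pc in simp)
  next
    case False
    then have sQ: "\<And>s. s \<in> S \<Longrightarrow> s * Q = Q * s" by blast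
    have QP: "Q * P = P * Q * P"
    proof (rule mat_col_eqI)
      fix j assume "j < dim_col (P * Q * P)"
      then have j: "j < 2^n" using Pc Qc by auto
      let ?v = "col P j"
      have v: "?v \<in> code_space n S" unfolding P_def by (rule colPi_code[OF j])
      have vc: "?v \<in> carrier_vec (2^n)" by (rule carrier_vecI) (use Pc in auto)
      have wc: "Q *\<^sub>v ?v \<in> carrier_vec (2^n)" using Qc vc by auto
      have "Q *\<^sub>v ?v \<in> code_space n S"
        unfolding code_space_def
      proof (intro CollectI conjI ballI)
        show "Q *\<^sub>v ?v \<in> carrier_vec (2^n)" by (rule wc)
        fix s assume s: "s \<in> S"
        have sc: "s \<in> carrier_mat (2^n) (2^n)" by (rule S_carrier[OF s])
        have "s *\<^sub>v (Q *\<^sub>v ?v) = (s * Q) *\<^sub>v ?v" by (rule assoc_mult_mat_vec[OF sc Qc vc, symmetric])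
        also have "\<dots> = Q *\<^sub>v (s *\<^sub>v ?v)" unfolding sQ[OF s] by (rule assoc_mult_mat_vec[OF Qc sc vc])
        also have "s *\<^sub>v ?v = ?v" using v s unfolding code_space_def by blast
        finally show "s *\<^sub>v (Q *\<^sub>v ?v) = Q *\<^sub>v ?v" .
      qed
      then have vfix: "P *\<^sub>v (Q *\<^sub>v ?v) = Q *\<^sub>v ?v" using code_iff[OF wc] unfolding P_def by blast
      have e1: "col (Q * P) j = Q *\<^sub>v ?v" by (rule col_mult2[OF Qc Pc j])
      have e2: "col (P * Q * P) j = P *\<^sub>v col (Q * P) j"
        unfolding assoc_mult_mat[OF Pc Qc Pc] by (rule col_mult2[OF Pc QPc j])
      show "col (Q * P) j = col (P * Q * P) j" by (simp only: e2 e1 vfix)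
    qed (use Pc Qc in auto)
    have a1: "mat_adjoint (Q * P) = P * Q" by (simp only: adj_mult[OF Qc Pc] Ph Qh)
    have a2: "mat_adjoint (P * Q * P) = P * Q * P"
      by (simp only: assoc_mult_mat[OF Pc Qc Pc] adj_mult[OF Pc QPc] a1 Ph)
    have "P * Q = mat_adjoint (Q * P)" by (rule a1[symmetric])
    also have "\<dots> = mat_adjoint (P * Q * P)" by (rule arg_cong[OF QP])
    also have "\<dots> = P * Q * P" by (rule a2)
    also have "\<dots> = Q * P" by (rule QP[symmetric])
    finally have "P * Q = Q * P" .
    then have False using nc unfolding P_def by simp
    then show "P * Q * P = 0\<^sub>m (2^n) (2^n)" ..
  qed
qed

end



lemma phase_div: "c \<in> {1, -1, \<i>, -\<i>} \<Longrightarrow> e \<in> {1, -1, \<i>, -\<i>} \<Longrightarrow> c / e \<in> {1, -1, \<i>, -\<i>}"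
  by auto

lemma phase_nz: "c \<in> {1, -1, \<i>, -\<i>} \<Longrightarrow> (c::complex) \<noteq> 0"
  by auto

lemma msum_cong: "(\<And>x. x \<in> X \<Longrightarrow> M x = M' x) \<Longrightarrow> msum r c X w M = msum r c X w M'"
  by (rule eq_matI) (auto simp: msum_index intro!: sum.cong)

lemma sandwich:
  assumes code: "stabilizer_subsystem_code n kL kJ S V"
    and M: "\<And>x. x \<in> X \<Longrightarrow> M x \<in> carrier_mat (2^n) (2^n)"
  shows "mat_adjoint V * msum (2^n) (2^n) X w M * V = msum (2^(kL+kJ)) (2^(kL+kJ)) X w (\<lambda>x. mat_adjoint V * M x * V)"
proof -
  have Vc: "V \<in> carrier_mat (2^n) (2^(kL+kJ))" by (rule V_carrier[OF code])
  have Vdc: "mat_adjoint V \<in> carrier_mat (2^(kL+kJ)) (2^n)" by (rule Vd_carrier[OF code])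
  have s1: "mat_adjoint V * msum (2^n) (2^n) X w M = msum (2^(kL+kJ)) (2^n) X w (\<lambda>x. mat_adjoint V * M x)"
    by (rule msum_mult_left[OF M Vdc])
  have s2: "msum (2^(kL+kJ)) (2^n) X w (\<lambda>x. mat_adjoint V * M x) * V = msum (2^(kL+kJ)) (2^(kL+kJ)) X w (\<lambda>x. mat_adjoint V * M x * V)"
    by (rule msum_mult_right[OF _ Vc]) (rule mult_carrier_mat[OF Vdc M])
  show ?thesis unfolding s1 s2 ..
qed

theorem lemma10:
  fixes n kL kJ :: nat and S :: "complex mat set" and V :: "complex mat" and R :: "nat set"
  assumes "stabilizer_subsystem_code n kL kJ S V"
    and "R \<subseteq> {..<n}"
  shows "bare_cleanable n kL kJ V R \<longleftrightarrow>
    (\<forall>PL \<in> pauli_group kL. \<exists>P \<in> pauli_group n.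
        supported_on n ({..<n} - R) P \<and> bare_implements kJ V P PL)"
proof -
  note code = assms(1)
  let ?m = "kL + kJ"
  let ?Ts = "{..<n} - R"
  let ?X = "PiE {..<n} (\<lambda>_. UNIV :: pauli1 set)"
  let ?P = "V * mat_adjoint V"
  have Vc: "V \<in> carrier_mat (2^n) (2^?m)" by (rule V_carrier[OF code])
  have Vdc: "mat_adjoint V \<in> carrier_mat (2^?m) (2^n)" by (rule Vd_carrier[OF code])
  have Pc: "?P \<in> carrier_mat (2^n) (2^n)" by (rule Pi_carrier[OF code])
  show ?thesis
  proof
    assume BC: "bare_cleanable n kL kJ V R"
    show "\<forall>PL \<in> pauli_group kL. \<exists>P \<in> pauli_group n. supported_on n ?Ts P \<and> bare_implements kJ V P PL"
    proof
      fix PL assume "PL \<in> pauli_group kL"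
      then obtain c0 p0 where PL: "PL = pauli_mat kL c0 p0" and c0: "c0 \<in> {1, -1, \<i>, -\<i>}"
        unfolding pauli_group_def by blast
      define t where "t = (\<lambda>q. if q < kJ then PI else p0 (q - kJ))"
      define T where "T = pauli_mat ?m c0 t"
      have TK: "kron PL (1\<^sub>m (2^kJ)) = T" unfolding PL T_def t_def by (rule kron_pauli)
      have "PL \<in> carrier_mat (2^kL) (2^kL)" unfolding PL by simp
      then obtain A where A: "A \<in> carrier_mat (2^n) (2^n)" "supported_on n ?Ts A" "bare_implements kJ V A PL"
        using BC unfolding bare_cleanable_def by blast
      from A(2) obtain B where B: "\<forall>i<2^n. \<forall>j<2^n. A $$ (i,j) = (if \<forall>q<n. q \<notin> ?Ts \<longrightarrow> qbit q i = qbit q j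
           then B (\<lambda>q. q \<in> ?Ts \<and> qbit q i) (\<lambda>q. q \<in> ?Ts \<and> qbit q j) else 0)"
        unfolding supported_on_def by blast
      define d where "d = dsup n ?Ts B"
      have Aexp: "A = msum (2^n) (2^n) ?X d (\<lambda>p. pauli_mat n 1 p)"
        unfolding d_def by (rule expand_sup[OF _ A(1) B]) auto
      have VAV: "mat_adjoint V * A * V = T" using A(3) TK unfolding bare_implements_def by simp
      have Texp: "T = msum (2^?m) (2^?m) ?X d (\<lambda>p. mat_adjoint V * pauli_mat n 1 p * V)"
        unfolding VAV[symmetric] Aexp by (rule sandwich[OF code]) simp
      have "phi (2^?m) T T = cnj c0 * c0 * (\<Prod>q<?m. if t q = t q then 2 else 0)"
        unfolding T_def by (rule phi_pauli)
      also have "\<dots> \<noteq> 0" using phase_nz[OF c0] by simp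
      finally have "phi (2^?m) T T \<noteq> 0" .
      also have "phi (2^?m) T T = (\<Sum>p\<in>?X. d p * phi (2^?m) T (mat_adjoint V * pauli_mat n 1 p * V))"
        by (subst (2) Texp) (rule phi_msum)
      finally obtain p where p: "p \<in> ?X" "d p * phi (2^?m) T (mat_adjoint V * pauli_mat n 1 p * V) \<noteq> 0"
        by (meson sum.not_neutral_contains_not_neutral)
      define Q where "Q = pauli_mat n 1 p"
      have Qc: "Q \<in> carrier_mat (2^n) (2^n)" unfolding Q_def by simp
      have dp: "d p \<noteq> 0" and phiQ: "phi (2^?m) T (mat_adjoint V * Q * V) \<noteq> 0" using p(2) unfolding Q_def by auto
      have comm: "Q * ?P = ?P * Q"
      proof (rule ccontr)
        assume nc: "Q * ?P \<noteq> ?P * Q"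
        have kz: "?P * Q * ?P = 0\<^sub>m (2^n) (2^n)" by (rule kill[OF code Q_def nc])
        have PQc: "?P * Q \<in> carrier_mat (2^n) (2^n)" using Pc Qc by simp
        have "mat_adjoint V * Q * V = (mat_adjoint V * ?P) * Q * (?P * V)"
          unfolding VdPi[OF code] PiV[OF code] ..
        also have "(mat_adjoint V * ?P) * Q = mat_adjoint V * (?P * Q)" by (rule assoc_mult_mat[OF Vdc Pc Qc])
        also have "mat_adjoint V * (?P * Q) * (?P * V) = mat_adjoint V * (?P * Q * (?P * V))"
          by (rule assoc_mult_mat[OF Vdc PQc mult_carrier_mat[OF Pc Vc]])
        also have "?P * Q * (?P * V) = (?P * Q * ?P) * V" by (rule assoc_mult_mat[OF PQc Pc Vc, symmetric])
        also have "\<dots> = 0\<^sub>m (2^n) (2^?m)" unfolding kz using Vc by simp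
        also have "mat_adjoint V * 0\<^sub>m (2^n) (2^?m) = 0\<^sub>m (2^?m) (2^?m)" by (rule right_mult_zero_mat[OF Vdc])
        finally have "mat_adjoint V * Q * V = 0\<^sub>m (2^?m) (2^?m)" .
        then show False using phiQ by (simp add: phi_zero)
      qed
      have "Q \<in> pauli_group n" unfolding Q_def pauli_group_def by blast
      from code_pauli[OF code this comm] obtain e u where eu: "mat_adjoint V * Q * V = pauli_mat ?m e u"
        and e: "e \<in> {1, -1, \<i>, -\<i>}" unfolding pauli_group_def by blast
      have tu: "\<forall>q<?m. t q = u q"
      proof (rule ccontr)
        assume "\<not> (\<forall>q<?m. t q = u q)"
        then obtain q0 where q0: "q0 < ?m" "t q0 \<noteq> u q0" by blast
        have "(\<Prod>q<?m. if t q = u q then 2 else 0) = (0::complex)"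
          using q0 by (intro prod_zero) auto
        then have "phi (2^?m) T (mat_adjoint V * Q * V) = 0" unfolding eu T_def phi_pauli by simp
        then show False using phiQ by simp
      qed
      have VQV: "mat_adjoint V * Q * V = pauli_mat ?m e t" unfolding eu by (rule pauli_cong[OF tu])
      have supp: "\<forall>q<n. q \<notin> ?Ts \<longrightarrow> p q = PI"
      proof (intro allI impI, rule ccontr)
        fix q assume "q < n" "q \<notin> ?Ts" "p q \<noteq> PI"
        then have "d p = 0" unfolding d_def by (rule dsup_zero)
        then show False using dp by simp
      qed
      define a where "a = c0 / e"
      have a: "a \<in> {1, -1, \<i>, -\<i>}" unfolding a_def by (rule phase_div[OF c0 e])
      have ae: "a * e = c0" unfolding a_def using phase_nz[OF e] by simp
      have Pa: "pauli_mat n a p = a \<cdot>\<^sub>m Q" unfolding Q_def pauli_smult by simp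
      show "\<exists>P \<in> pauli_group n. supported_on n ?Ts P \<and> bare_implements kJ V P PL"
      proof (intro bexI conjI)
        show "pauli_mat n a p \<in> pauli_group n" unfolding pauli_group_def using a by blast
        show "supported_on n ?Ts (pauli_mat n a p)" by (rule pauli_supported[OF supp])
        have csp: "pauli_mat n a p * ?P = ?P * pauli_mat n a p"
          unfolding Pa mult_smult_assoc_mat[OF Qc Pc] mult_smult_distrib[OF Pc Qc] comm ..
        have "mat_adjoint V * pauli_mat n a p * V = a \<cdot>\<^sub>m (mat_adjoint V * Q * V)"
          unfolding Pa mult_smult_distrib[OF Vdc Qc] mult_smult_assoc_mat[OF mult_carrier_mat[OF Vdc Qc] Vc] ..
        also have "\<dots> = T" unfolding VQV pauli_smult ae T_def ..
        finally have "mat_adjoint V * pauli_mat n a p * V = kron PL (1\<^sub>m (2^kJ))" unfolding TK .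
        then show "bare_implements kJ V (pauli_mat n a p) PL"
          unfolding bare_implements_def CSP_def code_proj_def using csp by simp
      qed
    qed
  next
    assume H: "\<forall>PL \<in> pauli_group kL. \<exists>P \<in> pauli_group n. supported_on n ?Ts P \<and> bare_implements kJ V P PL"
    show "bare_cleanable n kL kJ V R"
      unfolding bare_cleanable_def
    proof
      fix AL :: "complex mat" assume AL: "AL \<in> carrier_mat (2^kL) (2^kL)"
      let ?Y = "PiE {..<kL} (\<lambda>_. UNIV :: pauli1 set)"
      have "\<forall>p\<in>?Y. \<exists>P. P \<in> pauli_group n \<and> supported_on n ?Ts P \<and> bare_implements kJ V P (pauli_mat kL 1 p)"
      proof
        fix p :: "nat \<Rightarrow> pauli1"
        have "pauli_mat kL 1 p \<in> pauli_group kL" unfolding pauli_group_def by blast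
        then show "\<exists>P. P \<in> pauli_group n \<and> supported_on n ?Ts P \<and> bare_implements kJ V P (pauli_mat kL 1 p)"
          using H by blast
      qed
      from bchoice[OF this] obtain Pf where Pf: "\<forall>p\<in>?Y. Pf p \<in> pauli_group n \<and> supported_on n ?Ts (Pf p) \<and> bare_implements kJ V (Pf p) (pauli_mat kL 1 p)"
        by blast
      have Pfc: "\<And>p. p \<in> ?Y \<Longrightarrow> Pf p \<in> carrier_mat (2^n) (2^n)" using Pf pauli_group_carrier by blast
      define d where "d = dgen kL AL"
      define A where "A = msum (2^n) (2^n) ?Y d Pf"
      show "\<exists>A \<in> carrier_mat (2^n) (2^n). supported_on n ?Ts A \<and> bare_implements kJ V A AL"
      proof (intro bexI conjI)
        show "A \<in> carrier_mat (2^n) (2^n)" unfolding A_def by simp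
        show "supported_on n ?Ts A" unfolding A_def by (rule msum_supported) (use Pf in blast)
        have "A * ?P = msum (2^n) (2^n) ?Y d (\<lambda>p. Pf p * ?P)"
          unfolding A_def by (rule msum_mult_right[OF Pfc Pc])
        also have "\<dots> = msum (2^n) (2^n) ?Y d (\<lambda>p. ?P * Pf p)"
          by (rule msum_cong) (use Pf in \<open>auto simp: bare_implements_def CSP_def code_proj_def\<close>)
        also have "\<dots> = ?P * A"
          unfolding A_def by (rule msum_mult_left[OF Pfc Pc, symmetric])
        finally have csp: "A * ?P = ?P * A" .
        have "mat_adjoint V * A * V = msum (2^?m) (2^?m) ?Y d (\<lambda>p. mat_adjoint V * Pf p * V)"
          unfolding A_def by (rule sandwich[OF code Pfc])
        also have "\<dots> = msum (2^?m) (2^?m) ?Y d (\<lambda>p. kron (pauli_mat kL 1 p) (1\<^sub>m (2^kJ)))"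
          by (rule msum_cong) (use Pf in \<open>auto simp: bare_implements_def\<close>)
        also have "\<dots> = msum (2^kL * 2^kJ) (2^kL * 2^kJ) ?Y d (\<lambda>p. kron (pauli_mat kL 1 p) (1\<^sub>m (2^kJ)))"
          by (simp add: power_add)
        also have "\<dots> = kron (msum (2^kL) (2^kL) ?Y d (\<lambda>p. pauli_mat kL 1 p)) (1\<^sub>m (2^kJ))"
          by (rule kron_msum[symmetric]) auto
        also have "msum (2^kL) (2^kL) ?Y d (\<lambda>p. pauli_mat kL 1 p) = AL"
          unfolding d_def by (rule expand_gen[OF AL, symmetric])
        finally show "bare_implements kJ V A AL"
          unfolding bare_implements_def CSP_def code_proj_def using csp by simp
      qed
    qed
  qed
qed


end
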